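(* Let $\mathcal{G}=\{\mathcal{V},\mathcal{E},\boldsymbol{W}\}$ be a connected undirected weighted graph with $N$ vertices, with graph Laplacian $\boldsymbol{L}=\boldsymbol{D}-\boldsymbol{W}=\boldsymbol{U}\boldsymbol{\Lambda}\boldsymbol{U}^T$, where $\boldsymbol{U}=[\boldsymbol{u}_1,\dots,\boldsymbol{u}_N]$ is orthonormal and the eigenvalues are ordered $0=\lambda_1\le\dots\le\lambda_N$. Fix integers $1\le f_L\le f_U\le N$ and let $$C_b=\{\boldsymbol{x}\in\mathbb{R}^N:\ \boldsymbol{u}_i^T\boldsymbol{x}=0\ \text{for all } i\notin[f_L,f_U]\}.$$ Let $\mathcal{V}'=\{v_1,\dots,v_M\}\subseteq\mathcal{V}=\{1,\dots,N\}$ be a set of $M$ distinct sampled vertices and let $\boldsymbol{x}\in C_b$ be a signal with observed signs $s_i=\mathrm{sign}(x_{v_i})\in\{-1,0,1\}$, $i=1,\dots,M$ (with $\mathrm{sign}(0)=0$). Let $$C_v=\{\boldsymbol{y}\in\mathbb{R}^N:\ s_i y_{v_i}\ge 0 \text{ if } s_i\neq 0,\ y_{v_i}=0 \text{ if } s_i=0,\ i=1,\dots,M\},$$ and $C=C_b\cap C_v$. Define $\boldsymbol{P}_b=\boldsymbol{U}\boldsymbol{\Gamma}\boldsymbol{U}^T$, where $\boldsymbol{\Gamma}$ is diagonal with $\Gamma_{kk}=1$ if $k\in[f_L,f_U]$ and $0$ otherwise, and define $\boldsymbol{P}_v:\mathbb{R}^N\to\mathbb{R}^N$ by $(\boldsymbol{P}_v\boldsymbol{y})_j=0$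 if $j=v_i$ for some $i$ with $\mathrm{sign}(y_j)\neq s_i$, and $(\boldsymbol{P}_v\boldsymbol{y})_j=y_j$ otherwise. For an arbitrary initial point $\boldsymbol{x}_0\in\mathbb{R}^N$ define $\boldsymbol{x}_{n+1}=\boldsymbol{P}_b\boldsymbol{P}_v\boldsymbol{x}_n$. Then the sequence $\{\boldsymbol{x}_n\}$ converges to some point $\boldsymbol{x}^*\in C$, and the convergence rate is independent of the choice of the initial point $\boldsymbol{x}_0$.
   Context: $\boldsymbol{D}$ is the diagonal degree matrix with $D_{ii}=\sum_j W_{ij}$, and $W_{ij}>0$ iff $(i,j)\in\mathcal{E}$. $C_b$ is the set of band-limited signals with passband $[f_L,f_U]$; $\boldsymbol{P}_b$ is the orthogonal projection onto $C_b$ and $\boldsymbol{P}_v$ is the projection onto the closed convex cone $C_v$ of signals consistent with the observed signs. *)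

theory Defs
  imports "HOL-Analysis.Analysis"
begin

definition degree_matrix :: "real^'n^'n \<Rightarrow> real^'n^'n" where
  "degree_matrix W = (\<chi> i j. if i = j then (\<Sum>k\<in>UNIV. W $ i $ k) else 0)"

definition laplacian :: "real^'n^'n \<Rightarrow> real^'n^'n" where
  "laplacian W = degree_matrix W - W"

definition graph_edges :: "real^'n^'n \<Rightarrow> ('n \<times> 'n) set" where
  "graph_edges W = {(i, j). W $ i $ j > 0}"

definition graph_connected :: "real^'n^'n \<Rightarrow> bool" where
  "graph_connected W \<longleftrightarrow> (\<forall>i j. (i, j) \<in> (graph_edges W)\<^sup>*)"

definition band_set :: "(nat \<Rightarrow> real^'n) \<Rightarrow> nat \<Rightarrow> nat \<Rightarrow> (real^'n) set" where
  "band_set u fL fU = {x. \<forall>i\<in>{1..CARD('n)}. (i < fL \<or> fU < i) \<longrightarrow> u i \<bullet> x = 0}"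

definition sign_set :: "(nat \<Rightarrow> 'n) \<Rightarrow> nat \<Rightarrow> (nat \<Rightarrow> real) \<Rightarrow> (real^'n) set" where
  "sign_set v M s = {y. \<forall>i\<in>{1..M}.
      (s i \<noteq> 0 \<longrightarrow> s i * y $ v i \<ge> 0) \<and> (s i = 0 \<longrightarrow> y $ v i = 0)}"

definition Pb :: "(nat \<Rightarrow> real^'n) \<Rightarrow> nat \<Rightarrow> nat \<Rightarrow> real^'n \<Rightarrow> real^'n" where
  "Pb u fL fU y = (\<Sum>k\<in>{fL..fU}. (u k \<bullet> y) *\<^sub>R u k)"

definition Pv :: "(nat \<Rightarrow> 'n) \<Rightarrow> nat \<Rightarrow> (nat \<Rightarrow> real) \<Rightarrow> real^'n \<Rightarrow> real^'n" where
  "Pv v M s y = (\<chi> j. if (\<exists>i\<in>{1..M}. j = v i \<and> sgn (y $ j) \<noteq> s i) then 0 else y $ j)"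

end

theory Submission
  imports Defs
begin


lemma hoffman_base:
  fixes P :: "real^'n \<Rightarrow> real^'n" and a :: "'n \<Rightarrow> real^'n"
  assumes lin: "linear P"
  shows "\<exists>k\<ge>0. \<forall>y. \<exists>c. P c = c \<and> (\<forall>j\<in>Z. a j \<bullet> c = 0) \<and>
     norm (y - c) \<le> k * (norm (y - P y) + (\<Sum>j\<in>Z. \<bar>a j \<bullet> y\<bar>))"
proof -
  define C0 where "C0 = {c. P c = c \<and> (\<forall>j\<in>Z. a j \<bullet> c = 0)}"
  have subC0: "subspace C0"
    unfolding C0_def subspace_def using lin
    by (auto simp: linear_0 linear_add linear_scale inner_add_right)
  define f where "f w = (w - P w, \<chi> j. if j \<in> Z then a j \<bullet> w else 0)" for w
  have linf: "linear f"
    unfolding f_def using lin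
    by (intro linearI) (auto simp: linear_add linear_scale vec_eq_iff inner_add_right algebra_simps)
  define s where "s = {w. \<forall>c\<in>C0. orthogonal w c}"
  have subs: "subspace s" unfolding s_def subspace_def orthogonal_def
    by (auto simp: inner_add_left)
  have inj: "\<forall>x\<in>s. f x = 0 \<longrightarrow> x = 0"
  proof (intro ballI impI)
    fix x assume xs: "x \<in> s" and fx: "f x = 0"
    have "x \<in> C0" using fx unfolding C0_def f_def by (auto simp: vec_eq_iff zero_prod_def) metis
    with xs have "x \<bullet> x = 0" unfolding s_def orthogonal_def by auto
    then show "x = 0" by simp
  qed
  obtain e where e: "e > 0" "\<forall>x\<in>s. norm (f x) \<ge> e * norm x"
    using injective_imp_isometric[OF closed_subspace[OF subs] subs linear_conv_bounded_linear[THEN iffD1, OF linf] inj]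
    by blast
  show ?thesis
  proof (intro exI[of _ "1/e"] conjI allI)
    show "0 \<le> 1/e" using e by simp
    fix y
    obtain c w where c: "c \<in> span C0" and w: "\<And>z. z \<in> span C0 \<Longrightarrow> orthogonal w z" and yw: "y = c + w"
      using orthogonal_subspace_decomp_exists[of C0 y] by metis
    have cC: "c \<in> C0" using c span_eq_iff subC0 by blast
    have ws: "w \<in> s" using w span_base unfolding s_def by blast
    have fc: "f c = 0" using cC unfolding C0_def f_def by (auto simp: vec_eq_iff zero_prod_def)
    have "f y = f w" using yw fc linear_add[OF linf] by simp
    have "norm (f y) \<le> norm (y - P y) + norm (\<chi> j. if j \<in> Z then a j \<bullet> y else 0)"
      unfolding f_def by (rule norm_Pair_le)
    also have "norm (\<chi> j. if j \<in> Z then a j \<bullet> y else (0::real)) \<le> (\<Sum>j\<in>Z. \<bar>a j \<bullet> y\<bar>)"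
    proof -
      have "norm (\<chi> j. if j \<in> Z then a j \<bullet> y else (0::real)) \<le> (\<Sum>j\<in>UNIV. \<bar>(\<chi> j. if j \<in> Z then a j \<bullet> y else (0::real)) $ j\<bar>)"
        by (rule norm_le_l1_cart)
      also have "\<dots> = (\<Sum>j\<in>UNIV. if j \<in> Z then \<bar>a j \<bullet> y\<bar> else 0)"
        by (intro sum.cong) auto
      also have "\<dots> = (\<Sum>j\<in>Z. \<bar>a j \<bullet> y\<bar>)"
        by (simp add: sum.If_cases)
      finally show ?thesis .
    qed
    finally have fy: "norm (f y) \<le> norm (y - P y) + (\<Sum>j\<in>Z. \<bar>a j \<bullet> y\<bar>)" by simp
    have "e * norm (y - c) \<le> norm (f y)" using e(2) ws \<open>f y = f w\<close> yw by auto
    then have "norm (y - c) \<le> (1/e) * norm (f y)" using e(1) by (simp add: field_simps)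
    also have "\<dots> \<le> (1/e) * (norm (y - P y) + (\<Sum>j\<in>Z. \<bar>a j \<bullet> y\<bar>))"
      using fy e(1) by (simp add: divide_right_mono)
    finally show "\<exists>c. P c = c \<and> (\<forall>j\<in>Z. a j \<bullet> c = 0) \<and>
     norm (y - c) \<le> 1/e * (norm (y - P y) + (\<Sum>j\<in>Z. \<bar>a j \<bullet> y\<bar>))"
      using cC unfolding C0_def by blast
  qed
qed

lemma hoffman:
  fixes P :: "real^'n \<Rightarrow> real^'n" and a :: "'n \<Rightarrow> real^'n"
  assumes lin: "linear P"
  shows "\<exists>k\<ge>0. \<forall>y. \<exists>c. P c = c \<and> (\<forall>j\<in>Z. a j \<bullet> c = 0) \<and> (\<forall>j\<in>S. a j \<bullet> c \<ge> 0) \<and>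
     norm (y - c) \<le> k * (norm (y - P y) + (\<Sum>j\<in>Z. \<bar>a j \<bullet> y\<bar>) + (\<Sum>j\<in>S. max 0 (- (a j \<bullet> y))))"
proof -
  have "finite S" by simp
  then show ?thesis
  proof (induction S arbitrary: Z rule: finite_induct)
    case empty
    then show ?case using hoffman_base[OF lin, of Z a] by simp
  next
    case (insert j0 S)
    obtain k1 where k1: "k1 \<ge> 0" "\<And>y. \<exists>c. P c = c \<and> (\<forall>j\<in>Z. a j \<bullet> c = 0) \<and> (\<forall>j\<in>S. a j \<bullet> c \<ge> 0) \<and>
     norm (y - c) \<le> k1 * (norm (y - P y) + (\<Sum>j\<in>Z. \<bar>a j \<bullet> y\<bar>) + (\<Sum>j\<in>S. max 0 (- (a j \<bullet> y))))"
      using insert.IH[of Z] by blast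
    obtain k0 where k0: "k0 \<ge> 0" "\<And>y. \<exists>c. P c = c \<and> (\<forall>j\<in>insert j0 Z. a j \<bullet> c = 0) \<and> (\<forall>j\<in>S. a j \<bullet> c \<ge> 0) \<and>
     norm (y - c) \<le> k0 * (norm (y - P y) + (\<Sum>j\<in>insert j0 Z. \<bar>a j \<bullet> y\<bar>) + (\<Sum>j\<in>S. max 0 (- (a j \<bullet> y))))"
      using insert.IH[of "insert j0 Z"] by blast
    define k where "k = (1 + k0 * norm (a j0)) * k1 + k0"
    show ?case
    proof (intro exI[of _ k] conjI allI)
      show "0 \<le> k" unfolding k_def using k0 k1 by simp
      fix y
      define R where "R = norm (y - P y) + (\<Sum>j\<in>Z. \<bar>a j \<bullet> y\<bar>) + (\<Sum>j\<in>insert j0 S. max 0 (- (a j \<bullet> y)))"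
      have sumins: "(\<Sum>j\<in>insert j0 S. max 0 (- (a j \<bullet> y))) = max 0 (- (a j0 \<bullet> y)) + (\<Sum>j\<in>S. max 0 (- (a j \<bullet> y)))"
        using insert.hyps by simp
      have Rge: "norm (y - P y) + (\<Sum>j\<in>Z. \<bar>a j \<bullet> y\<bar>) + (\<Sum>j\<in>S. max 0 (- (a j \<bullet> y))) \<le> R"
        unfolding R_def sumins by simp
      have Rj0: "max 0 (- (a j0 \<bullet> y)) \<le> R"
      proof -
        have "0 \<le> (\<Sum>j\<in>Z. \<bar>a j \<bullet> y\<bar>)" by (simp add: sum_nonneg)
        moreover have "0 \<le> (\<Sum>j\<in>S. max 0 (- (a j \<bullet> y)))" by (simp add: sum_nonneg)
        ultimately show ?thesis unfolding R_def sumins using norm_ge_zero[of "y - P y"] by linarith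
      qed
      obtain z where z: "P z = z" "\<forall>j\<in>Z. a j \<bullet> z = 0" "\<forall>j\<in>S. a j \<bullet> z \<ge> 0"
        "norm (y - z) \<le> k1 * (norm (y - P y) + (\<Sum>j\<in>Z. \<bar>a j \<bullet> y\<bar>) + (\<Sum>j\<in>S. max 0 (- (a j \<bullet> y))))"
        using k1(2)[of y] by blast
      have yz: "norm (y - z) \<le> k1 * R" using z(4) Rge k1(1) by (meson mult_left_mono order_trans)
      show "\<exists>c. P c = c \<and> (\<forall>j\<in>Z. a j \<bullet> c = 0) \<and> (\<forall>j\<in>insert j0 S. a j \<bullet> c \<ge> 0) \<and> norm (y - c) \<le> k * R"
      proof (cases "a j0 \<bullet> z \<ge> 0")
        case True
        have "k1 * R \<le> k * R"
          unfolding k_def using k0 k1 Rj0 by (intro mult_right_mono) (auto simp: algebra_simps)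
        then show ?thesis using True z yz by (intro exI[of _ z]) auto
      next
        case False
        have j0Z: "j0 \<notin> Z" using False z(2) by auto
        obtain c where c: "P c = c" "\<forall>j\<in>insert j0 Z. a j \<bullet> c = 0" "\<forall>j\<in>S. a j \<bullet> c \<ge> 0"
          "norm (z - c) \<le> k0 * (norm (z - P z) + (\<Sum>j\<in>insert j0 Z. \<bar>a j \<bullet> z\<bar>) + (\<Sum>j\<in>S. max 0 (- (a j \<bullet> z))))"
          using k0(2)[of z] by blast
        have "(\<Sum>j\<in>insert j0 Z. \<bar>a j \<bullet> z\<bar>) = \<bar>a j0 \<bullet> z\<bar>"
          using j0Z z(2) by (simp add: sum.insert_if)
        moreover have "(\<Sum>j\<in>S. max 0 (- (a j \<bullet> z))) = 0"
          using z(3) by (intro sum.neutral) auto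
        ultimately have zc: "norm (z - c) \<le> k0 * \<bar>a j0 \<bullet> z\<bar>" using c(4) z(1) by simp
        have "\<bar>a j0 \<bullet> z\<bar> = - (a j0 \<bullet> y) + a j0 \<bullet> (y - z)" using False by (simp add: inner_diff_right)
        also have "\<dots> \<le> max 0 (- (a j0 \<bullet> y)) + norm (a j0) * norm (y - z)"
          using norm_cauchy_schwarz[of "a j0" "y - z"] by linarith
        also have "\<dots> \<le> R + norm (a j0) * (k1 * R)"
          using Rj0 yz by (simp add: add_mono mult_left_mono)
        finally have aj: "\<bar>a j0 \<bullet> z\<bar> \<le> R + norm (a j0) * (k1 * R)" .
        have "norm (y - c) \<le> norm (y - z) + norm (z - c)" by (rule norm_diff_triangle_le[of y z _ c]) auto
        also have "\<dots> \<le> k1 * R + k0 * (R + norm (a j0) * (k1 * R))"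
          using yz zc aj k0(1) by (meson add_mono mult_left_mono order_trans)
        also have "\<dots> = k * R" unfolding k_def by (simp add: algebra_simps)
        finally show ?thesis using c False by (intro exI[of _ c]) auto
      qed
    qed
  qed
qed



lemma Pb_inner:
  fixes u :: "nat \<Rightarrow> real^'n"
  assumes ON: "\<forall>i\<in>{1..CARD('n)}. \<forall>j\<in>{1..CARD('n)}. u i \<bullet> u j = (if i = j then 1 else 0)"
    and b: "1 \<le> fL" "fU \<le> CARD('n)" and i: "i \<in> {1..CARD('n)}"
  shows "u i \<bullet> Pb u fL fU y = (if i \<in> {fL..fU} then u i \<bullet> y else 0)"
proof -
  have "u i \<bullet> Pb u fL fU y = (\<Sum>k\<in>{fL..fU}. (u k \<bullet> y) * (u i \<bullet> u k))"
    unfolding Pb_def by (simp add: inner_sum_right)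
  also have "\<dots> = (\<Sum>k\<in>{fL..fU}. if k = i then u k \<bullet> y else 0)"
    using ON i b by (intro sum.cong) auto
  also have "\<dots> = (if i \<in> {fL..fU} then u i \<bullet> y else 0)"
    by (simp add: sum.delta')
  finally show ?thesis .
qed

lemma Pb_linear: "linear (Pb u fL fU)"
  unfolding Pb_def
  by (intro linearI) (auto simp: inner_add_right scaleR_add_left sum.distrib scaleR_sum_right)

lemma Pb_adj: "Pb u fL fU y \<bullet> w = y \<bullet> Pb u fL fU w"
  unfolding Pb_def by (simp add: inner_sum_left inner_sum_right) (rule sum.cong, auto simp: inner_commute)

lemma Pb_idem:
  fixes u :: "nat \<Rightarrow> real^'n"
  assumes ON: "\<forall>i\<in>{1..CARD('n)}. \<forall>j\<in>{1..CARD('n)}. u i \<bullet> u j = (if i = j then 1 else 0)"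
    and b: "1 \<le> fL" "fU \<le> CARD('n)"
  shows "Pb u fL fU (Pb u fL fU y) = Pb u fL fU y"
proof -
  have "\<And>k. k \<in> {fL..fU} \<Longrightarrow> u k \<bullet> Pb u fL fU y = u k \<bullet> y"
    using Pb_inner[OF ON b] b by auto
  then show ?thesis unfolding Pb_def[of u fL fU "Pb u fL fU y"]
    by (simp add: Pb_def)
qed

lemma Pb_in_band:
  fixes u :: "nat \<Rightarrow> real^'n"
  assumes ON: "\<forall>i\<in>{1..CARD('n)}. \<forall>j\<in>{1..CARD('n)}. u i \<bullet> u j = (if i = j then 1 else 0)"
    and b: "1 \<le> fL" "fU \<le> CARD('n)"
  shows "Pb u fL fU y \<in> band_set u fL fU"
  unfolding band_set_def using Pb_inner[OF ON b] by auto

lemma u_expand: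
  fixes u :: "nat \<Rightarrow> real^'n"
  assumes ON: "\<forall>i\<in>{1..CARD('n)}. \<forall>j\<in>{1..CARD('n)}. u i \<bullet> u j = (if i = j then 1 else 0)"
  shows "y = (\<Sum>k\<in>{1..CARD('n)}. (u k \<bullet> y) *\<^sub>R u k)"
proof -
  let ?I = "{1..CARD('n)}"
  have inj: "inj_on u ?I"
  proof (rule inj_onI)
    fix i j assume "i \<in> ?I" "j \<in> ?I" "u i = u j"
    then have "u i \<bullet> u j = 1" using ON by auto
    then show "i = j" using ON \<open>i \<in> ?I\<close> \<open>j \<in> ?I\<close> by (auto split: if_splits)
  qed
  have po: "pairwise orthogonal (u ` ?I)"
    unfolding pairwise_def orthogonal_def using ON by auto
  have n0: "0 \<notin> u ` ?I" using ON by fastforce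
  have ind: "independent (u ` ?I)" by (rule pairwise_orthogonal_independent[OF po n0])
  have cardU: "card (u ` ?I) = CARD('n)" using card_image[OF inj] by simp
  have sp: "UNIV \<subseteq> span (u ` ?I)"
  proof (rule card_ge_dim_independent[OF subset_UNIV ind])
    have "dim (UNIV::(real^'n) set) = CARD('n)" by simp
    then show "dim (UNIV::(real^'n) set) \<le> card (u ` ?I)" using cardU by linarith
  qed
  define w where "w = y - (\<Sum>k\<in>?I. (u k \<bullet> y) *\<^sub>R u k)"
  have orth: "orthogonal w z" if zU: "z \<in> u ` ?I" for z
  proof -
    obtain i where i: "i \<in> ?I" "z = u i" using zU by blast
    have "u i \<bullet> (\<Sum>k\<in>?I. (u k \<bullet> y) *\<^sub>R u k) = (\<Sum>k\<in>?I. if k = i then u k \<bullet> y else 0)"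
      unfolding inner_sum_right using ON i by (intro sum.cong) auto
    also have "\<dots> = u i \<bullet> y" using i by (simp add: sum.delta')
    finally show ?thesis unfolding orthogonal_def w_def i(2) by (simp add: inner_diff_right inner_commute)
  qed
  have "orthogonal w w" using orthogonal_to_span[OF _ orth] sp by blast
  then have "w = 0" by (simp add: orthogonal_def)
  then show ?thesis unfolding w_def by simp
qed

lemma band_fix:
  fixes u :: "nat \<Rightarrow> real^'n"
  assumes ON: "\<forall>i\<in>{1..CARD('n)}. \<forall>j\<in>{1..CARD('n)}. u i \<bullet> u j = (if i = j then 1 else 0)"
    and b: "1 \<le> fL" "fU \<le> CARD('n)"
    and y: "y \<in> band_set u fL fU"
  shows "Pb u fL fU y = y"
proof -
  have "y = (\<Sum>k\<in>{1..CARD('n)}. (u k \<bullet> y) *\<^sub>R u k)" by (rule u_expand[OF ON])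
  also have "\<dots> = (\<Sum>k\<in>{fL..fU}. (u k \<bullet> y) *\<^sub>R u k)"
    using y b unfolding band_set_def
    by (intro sum.mono_neutral_right) auto
  finally show ?thesis unfolding Pb_def by simp
qed

lemma Pb_pyth:
  fixes u :: "nat \<Rightarrow> real^'n"
  assumes ON: "\<forall>i\<in>{1..CARD('n)}. \<forall>j\<in>{1..CARD('n)}. u i \<bullet> u j = (if i = j then 1 else 0)"
    and b: "1 \<le> fL" "fU \<le> CARD('n)"
    and z: "Pb u fL fU z = z"
  shows "(norm (Pb u fL fU y - z))\<^sup>2 + (norm (y - Pb u fL fU y))\<^sup>2 = (norm (y - z))\<^sup>2"
proof -
  let ?P = "Pb u fL fU"
  have "(y - ?P y) \<bullet> (?P y - z) = (y - ?P y) \<bullet> ?P (y - z)"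
    by (simp add: z linear_diff[OF Pb_linear])
  also have "\<dots> = ?P (y - ?P y) \<bullet> (y - z)" by (simp add: Pb_adj)
  also have "\<dots> = 0" by (simp add: linear_diff[OF Pb_linear] Pb_idem[OF ON b])
  finally have "orthogonal (y - ?P y) (?P y - z)" by (simp add: orthogonal_def)
  from norm_add_Pythagorean[OF this] show ?thesis by (simp add: add.commute)
qed



lemma normsq_sum: "(norm (w::real^'n))\<^sup>2 = (\<Sum>j\<in>UNIV. (w$j)\<^sup>2)"
  by (simp only: power2_norm_eq_inner inner_vec_def) (simp add: power2_eq_square)

lemma Pv_in: "Pv v M s y \<in> sign_set v M s"
  unfolding sign_set_def
proof (intro CollectI ballI conjI impI)
  fix i assume i: "i \<in> {1..M}"
  show "s i \<noteq> 0 \<Longrightarrow> 0 \<le> s i * Pv v M s y $ v i"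
  proof (cases "\<exists>i'\<in>{1..M}. v i = v i' \<and> sgn (y $ v i) \<noteq> s i'")
    case True then show ?thesis by (simp add: Pv_def)
  next
    case False
    then have "sgn (y $ v i) = s i" using i by blast
    then have "s i * y $ v i = \<bar>y $ v i\<bar>" using abs_sgn[of "y $ v i"] by (simp add: mult.commute)
    then have "0 \<le> s i * y $ v i" by simp
    then show ?thesis using False by (simp add: Pv_def)
  qed
  show "s i = 0 \<Longrightarrow> Pv v M s y $ v i = 0"
  proof (cases "\<exists>i'\<in>{1..M}. v i = v i' \<and> sgn (y $ v i) \<noteq> s i'")
    case True then show ?thesis by (simp add: Pv_def)
  next
    case False
    assume "s i = 0"
    moreover have "sgn (y $ v i) = s i" using i False by blast
    ultimately have "sgn (y $ v i) = 0" by simp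
    then have y0: "y $ v i = 0" by (simp add: sgn_0_0)
    have "Pv v M s y $ v i = y $ v i" unfolding Pv_def vec_lambda_beta by (rule if_not_P[OF False])
    with y0 show ?thesis by simp
  qed
qed

lemma Pv_firm:
  assumes s3: "\<forall>i. s i = -1 \<or> s i = 0 \<or> s i = 1"
    and z: "z \<in> sign_set v M s"
  shows "(norm (Pv v M s y - z))\<^sup>2 + (norm (y - Pv v M s y))\<^sup>2 \<le> (norm (y - z))\<^sup>2"
proof -
  have pt: "((Pv v M s y - z) $ j)\<^sup>2 + ((y - Pv v M s y) $ j)\<^sup>2 \<le> ((y - z) $ j)\<^sup>2" for j
  proof (cases "\<exists>i\<in>{1..M}. j = v i \<and> sgn (y $ j) \<noteq> s i")
    case True
    then obtain i where i: "i \<in> {1..M}" "j = v i" "sgn (y $ j) \<noteq> s i" by blast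
    have zc: "(s i \<noteq> 0 \<longrightarrow> s i * z $ j \<ge> 0) \<and> (s i = 0 \<longrightarrow> z $ j = 0)"
      using z i unfolding sign_set_def by auto
    have "y $ j * z $ j \<le> 0"
    proof -
      have "s i = -1 \<or> s i = 0 \<or> s i = 1" using s3 by blast
      moreover have "y $ j > 0 \<or> y $ j = 0 \<or> y $ j < 0" by linarith
      ultimately show ?thesis using zc i(3)
        by (auto simp: mult_le_0_iff)
    qed
    moreover have "Pv v M s y $ j = 0" unfolding Pv_def vec_lambda_beta by (rule if_P[OF True])
    ultimately show ?thesis
      by (simp add: power2_eq_square algebra_simps)
  next
    case False
    have "Pv v M s y $ j = y $ j" unfolding Pv_def vec_lambda_beta by (rule if_not_P[OF False])
    then show ?thesis by simp
  qed
  show ?thesis unfolding normsq_sum sum.distrib[symmetric]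
    by (rule sum_mono) (rule pt)
qed



definition aa :: "real^'n \<Rightarrow> 'n \<Rightarrow> real^'n" where
  "aa x j = (if x $ j = 0 then axis j 1 else sgn (x $ j) *\<^sub>R axis j 1)"

lemma aa_inner: "aa x j \<bullet> y = (if x $ j = 0 then y $ j else sgn (x $ j) * y $ j)"
  unfolding aa_def by (simp add: inner_axis')

lemma sign_set_eq:
  "sign_set v M (\<lambda>i. sgn (x $ v i)) =
   {y. (\<forall>j\<in>{j\<in>v ` {1..M}. x $ j = 0}. aa x j \<bullet> y = 0) \<and> (\<forall>j\<in>{j\<in>v ` {1..M}. x $ j \<noteq> 0}. aa x j \<bullet> y \<ge> 0)}"
  unfolding sign_set_def aa_inner by (auto simp: sgn_0_0)

lemma resid_bound:
  fixes x :: "real^'n" and v :: "nat \<Rightarrow> 'n" and M :: nat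
  defines "Q \<equiv> Pv v M (\<lambda>i. sgn (x $ v i))"
  shows "(\<Sum>j\<in>{j\<in>v ` {1..M}. x $ j = 0}. \<bar>aa x j \<bullet> y\<bar>) + (\<Sum>j\<in>{j\<in>v ` {1..M}. x $ j \<noteq> 0}. max 0 (- (aa x j \<bullet> y)))
     \<le> 2 * CARD('n) * norm (y - Q y)"
proof -
  let ?Z = "{j\<in>v ` {1..M}. x $ j = 0}" and ?S = "{j\<in>v ` {1..M}. x $ j \<noteq> 0}"
  have zt: "\<bar>aa x j \<bullet> y\<bar> \<le> norm (y - Q y)" if j: "j \<in> ?Z" for j
  proof (cases "y $ j = 0")
    case True then show ?thesis using j by (simp add: aa_inner)
  next
    case False
    obtain i where i: "i \<in> {1..M}" "j = v i" "x $ j = 0" using j by blast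
    have "sgn (y $ j) \<noteq> sgn (x $ v i)" using False i by (simp add: sgn_0_0)
    then have "\<exists>i\<in>{1..M}. j = v i \<and> sgn (y $ j) \<noteq> sgn (x $ v i)" using i by blast
    then have "Q y $ j = 0" unfolding Q_def Pv_def vec_lambda_beta by (rule if_P)
    then have "\<bar>aa x j \<bullet> y\<bar> = \<bar>(y - Q y) $ j\<bar>" using i by (simp add: aa_inner)
    then show ?thesis using component_le_norm_cart by metis
  qed
  have st: "max 0 (- (aa x j \<bullet> y)) \<le> norm (y - Q y)" if j: "j \<in> ?S" for j
  proof (cases "sgn (x $ j) * y $ j < 0")
    case False then show ?thesis using j by (simp add: aa_inner)
  next
    case True
    obtain i where i: "i \<in> {1..M}" "j = v i" "x $ j \<noteq> 0" using j by blast
    have "sgn (y $ j) \<noteq> sgn (x $ v i)" using True i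
      by (auto simp: sgn_if split: if_splits)
    then have "\<exists>i\<in>{1..M}. j = v i \<and> sgn (y $ j) \<noteq> sgn (x $ v i)" using i by blast
    then have "Q y $ j = 0" unfolding Q_def Pv_def vec_lambda_beta by (rule if_P)
    then have "\<bar>(y - Q y) $ j\<bar> = \<bar>y $ j\<bar>" by simp
    moreover have "max 0 (- (aa x j \<bullet> y)) \<le> \<bar>y $ j\<bar>" using i True
      by (auto simp: aa_inner sgn_if)
    ultimately show ?thesis using component_le_norm_cart by (metis order_trans)
  qed
  have "(\<Sum>j\<in>?Z. \<bar>aa x j \<bullet> y\<bar>) \<le> (\<Sum>j\<in>?Z. norm (y - Q y))" by (rule sum_mono) (rule zt)
  also have "\<dots> = card ?Z * norm (y - Q y)" by simp
  also have "\<dots> \<le> CARD('n) * norm (y - Q y)"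
    by (intro mult_right_mono) (auto simp: card_mono)
  finally have 1: "(\<Sum>j\<in>?Z. \<bar>aa x j \<bullet> y\<bar>) \<le> CARD('n) * norm (y - Q y)" .
  have "(\<Sum>j\<in>?S. max 0 (- (aa x j \<bullet> y))) \<le> (\<Sum>j\<in>?S. norm (y - Q y))" by (rule sum_mono) (rule st)
  also have "\<dots> = card ?S * norm (y - Q y)" by simp
  also have "\<dots> \<le> CARD('n) * norm (y - Q y)"
    by (intro mult_right_mono) (auto simp: card_mono)
  finally have 2: "(\<Sum>j\<in>?S. max 0 (- (aa x j \<bullet> y))) \<le> CARD('n) * norm (y - Q y)" .
  from 1 2 show ?thesis by simp
qed



theorem theorem1:
  fixes W :: "real^'n^'n"
    and u :: "nat \<Rightarrow> real^'n"
    and lam :: "nat \<Rightarrow> real"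
    and fL fU M :: nat
    and v :: "nat \<Rightarrow> 'n"
    and x :: "real^'n"
  assumes W_nonneg: "\<forall>i j. W $ i $ j \<ge> 0"
    and W_sym: "\<forall>i j. W $ i $ j = W $ j $ i"
    and conn: "graph_connected W"
    and orthonormal: "\<forall>i\<in>{1..CARD('n)}. \<forall>j\<in>{1..CARD('n)}. u i \<bullet> u j = (if i = j then 1 else 0)"
    and eigen: "\<forall>k\<in>{1..CARD('n)}. laplacian W *v u k = lam k *\<^sub>R u k"
    and lam_first: "lam 1 = 0"
    and lam_sorted: "\<forall>i\<in>{1..CARD('n)}. \<forall>j\<in>{1..CARD('n)}. i \<le> j \<longrightarrow> lam i \<le> lam j"
    and band: "1 \<le> fL" "fL \<le> fU" "fU \<le> CARD('n)"
    and inj_v: "inj_on v {1..M}"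
    and x_band: "x \<in> band_set u fL fU"
  shows "\<exists>q::real. 0 \<le> q \<and> q < 1 \<and>
    (\<forall>x0 :: real^'n.
       let s = (\<lambda>i. sgn (x $ v i));
           C = band_set u fL fU \<inter> sign_set v M s;
           xs = (\<lambda>n. ((Pb u fL fU \<circ> Pv v M s) ^^ n) x0)
       in \<exists>xstar \<in> C. xs \<longlonglongrightarrow> xstar \<and>
            (\<exists>K. \<forall>n. norm (xs n - xstar) \<le> K * q ^ n))"
proof -
  note ON = orthonormal
  note b = band(1) band(3)
  define s where "s = (\<lambda>i. sgn (x $ v i))"
  define Z where "Z = {j\<in>v ` {1..M}. x $ j = 0}"
  define S where "S = {j\<in>v ` {1..M}. x $ j \<noteq> 0}"
  define C where "C = band_set u fL fU \<inter> sign_set v M s"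
  let ?P = "Pb u fL fU"
  let ?Q = "Pv v M s"
  obtain \<kappa> where kap: "\<kappa> \<ge> 0" "\<forall>y. \<exists>c. ?P c = c \<and> (\<forall>j\<in>Z. aa x j \<bullet> c = 0) \<and> (\<forall>j\<in>S. aa x j \<bullet> c \<ge> 0) \<and>
     norm (y - c) \<le> \<kappa> * (norm (y - ?P y) + (\<Sum>j\<in>Z. \<bar>aa x j \<bullet> y\<bar>) + (\<Sum>j\<in>S. max 0 (- (aa x j \<bullet> y))))"
    using hoffman[OF Pb_linear[of u fL fU], where Z=Z and a="aa x" and S=S] by blast
  define K where "K = 2 * real CARD('n) * \<kappa> + 2"
  have K2: "K \<ge> 2" unfolding K_def using kap(1) by simp
  define q where "q = sqrt (1 - 1 / K\<^sup>2)"
  have K4: "4 \<le> K\<^sup>2" using power_mono[OF K2, of 2] by simp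
  have invK: "1 / K\<^sup>2 \<le> 1/4" by (rule divide_left_mono) (use K4 in auto)
  have invKpos: "0 < 1 / K\<^sup>2" using K2 by simp
  have q0: "0 < q" unfolding q_def using invK by simp
  have q1: "q < 1" unfolding q_def using invKpos by simp
  have qsq: "q\<^sup>2 = 1 - 1 / K\<^sup>2" unfolding q_def using invK by simp
  have s3: "\<forall>i. s i = -1 \<or> s i = 0 \<or> s i = 1" unfolding s_def by (auto simp: sgn_if)
  have inC: "c \<in> C" if "?P c = c" "\<forall>j\<in>Z. aa x j \<bullet> c = 0" "\<forall>j\<in>S. aa x j \<bullet> c \<ge> 0" for c
  proof -
    have "c \<in> band_set u fL fU" using Pb_in_band[OF ON b, of c] that(1) by simp
    moreover have "c \<in> sign_set v M s" unfolding s_def sign_set_eq using that(2,3) unfolding Z_def S_def by blast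
    ultimately show ?thesis unfolding C_def by blast
  qed
  have CP: "?P c = c" if "c \<in> C" for c using band_fix[OF ON b] that unfolding C_def by blast
  have closedC: "closed C"
  proof -
    have "band_set u fL fU = (\<Inter>i\<in>{i\<in>{1..CARD('n)}. i < fL \<or> fU < i}. {y. u i \<bullet> y = 0})"
      unfolding band_set_def by auto
    then have c1: "closed (band_set u fL fU)" by (auto intro!: closed_INT closed_hyperplane)
    have "sign_set v M s = (\<Inter>j\<in>Z. {y. aa x j \<bullet> y = 0}) \<inter> (\<Inter>j\<in>S. {y. aa x j \<bullet> y \<ge> 0})"
      unfolding s_def sign_set_eq Z_def S_def by auto
    then have c2: "closed (sign_set v M s)"
      by (auto intro!: closed_INT closed_hyperplane closed_halfspace_ge closed_Int)
    show ?thesis unfolding C_def using c1 c2 by (rule closed_Int)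
  qed
  have Cne: "C \<noteq> {}" using inC[of 0] linear_0[OF Pb_linear] by auto
  have F: "(norm (?P (?Q y) - c))\<^sup>2 + (norm (y - ?Q y))\<^sup>2 \<le> (norm (y - c))\<^sup>2" if c: "c \<in> C" for y c
  proof -
    have "(norm (?P (?Q y) - c))\<^sup>2 + (norm (?Q y - ?P (?Q y)))\<^sup>2 = (norm (?Q y - c))\<^sup>2"
      by (rule Pb_pyth[OF ON b CP[OF c]])
    moreover have "(norm (?Q y - c))\<^sup>2 + (norm (y - ?Q y))\<^sup>2 \<le> (norm (y - c))\<^sup>2"
      using Pv_firm[OF s3] c unfolding C_def by blast
    moreover have "0 \<le> (norm (?Q y - ?P (?Q y)))\<^sup>2" by simp
    ultimately show ?thesis by linarith
  qed
  have Fej: "norm (?P (?Q y) - c) \<le> norm (y - c)" if c: "c \<in> C" for y c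
  proof -
    have "(norm (?P (?Q y) - c))\<^sup>2 \<le> (norm (y - c))\<^sup>2" using F[OF c, of y] zero_le_power2[of "norm (y - ?Q y)"] by linarith
    then show ?thesis by (rule power2_le_imp_le) simp
  qed
  have H: "infdist y C \<le> K * norm (y - ?Q y)" if Py: "?P y = y" for y
  proof -
    obtain c where c: "?P c = c" "\<forall>j\<in>Z. aa x j \<bullet> c = 0" "\<forall>j\<in>S. aa x j \<bullet> c \<ge> 0"
      "norm (y - c) \<le> \<kappa> * (norm (y - ?P y) + (\<Sum>j\<in>Z. \<bar>aa x j \<bullet> y\<bar>) + (\<Sum>j\<in>S. max 0 (- (aa x j \<bullet> y))))"
      using kap(2) by blast
    have R: "(\<Sum>j\<in>Z. \<bar>aa x j \<bullet> y\<bar>) + (\<Sum>j\<in>S. max 0 (- (aa x j \<bullet> y))) \<le> 2 * CARD('n) * norm (y - ?Q y)"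
      using resid_bound[where x=x and v=v and M=M and y=y] unfolding Z_def S_def s_def by simp
    have "infdist y C \<le> dist y c" using inC[OF c(1-3)] by (rule infdist_le)
    also have "\<dots> = norm (y - c)" by (simp add: dist_norm)
    also have "\<dots> \<le> \<kappa> * (2 * CARD('n) * norm (y - ?Q y))"
    proof -
      have "norm (y - c) \<le> \<kappa> * ((\<Sum>j\<in>Z. \<bar>aa x j \<bullet> y\<bar>) + (\<Sum>j\<in>S. max 0 (- (aa x j \<bullet> y))))"
        using c(4) Py by (simp add: add.assoc)
      also have "\<dots> \<le> \<kappa> * (2 * CARD('n) * norm (y - ?Q y))"
        by (rule mult_left_mono[OF R kap(1)])
      finally show ?thesis .
    qed
    also have "\<dots> \<le> K * norm (y - ?Q y)"
      unfolding K_def by (simp add: algebra_simps)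
    finally show ?thesis .
  qed
  have Dstep: "infdist (?P (?Q y)) C \<le> q * infdist y C" if Py: "?P y = y" for y
  proof -
    obtain c where c: "c \<in> C" "infdist y C = dist y c"
      using infdist_attains_inf[OF closedC Cne] by blast
    define D where "D = infdist y C"
    have D0: "0 \<le> D" unfolding D_def by (rule infdist_nonneg)
    have "infdist (?P (?Q y)) C \<le> norm (?P (?Q y) - c)" using infdist_le[OF c(1)] by (simp add: dist_norm)
    then have "(infdist (?P (?Q y)) C)\<^sup>2 \<le> (norm (?P (?Q y) - c))\<^sup>2"
      using infdist_nonneg by (intro power_mono) auto
    also have "\<dots> \<le> D\<^sup>2 - (norm (y - ?Q y))\<^sup>2"
      using F[OF c(1), of y] c(2) unfolding D_def by (simp add: dist_norm)
    also have "\<dots> \<le> D\<^sup>2 - (D / K)\<^sup>2"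
    proof -
      have "D / K \<le> norm (y - ?Q y)" using H[OF Py] K2 unfolding D_def by (simp add: divide_simps mult.commute)
      then have "(D / K)\<^sup>2 \<le> (norm (y - ?Q y))\<^sup>2" using D0 K2 by (intro power_mono) auto
      then show ?thesis by simp
    qed
    also have "\<dots> = (q * D)\<^sup>2"
    proof -
      have "(q * D)\<^sup>2 = (1 - 1 / K\<^sup>2) * D\<^sup>2" unfolding power_mult_distrib qsq ..
      also have "\<dots> = D\<^sup>2 - D\<^sup>2 / K\<^sup>2" by (simp add: left_diff_distrib)
      finally show ?thesis by (simp add: power_divide)
    qed
    finally have sq: "(infdist (?P (?Q y)) C)\<^sup>2 \<le> (q * D)\<^sup>2" .
    have "0 \<le> q * D" using q0 D0 by simp
    with sq have "infdist (?P (?Q y)) C \<le> q * D" by (rule power2_le_imp_le)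
    then show ?thesis unfolding D_def .
  qed
  have Dmono: "infdist (?P (?Q y)) C \<le> infdist y C" for y
  proof -
    obtain c where c: "c \<in> C" "infdist y C = dist y c"
      using infdist_attains_inf[OF closedC Cne] by blast
    have "infdist (?P (?Q y)) C \<le> norm (?P (?Q y) - c)" using infdist_le[OF c(1)] by (simp add: dist_norm)
    also have "\<dots> \<le> norm (y - c)" by (rule Fej[OF c(1)])
    finally show ?thesis using c(2) by (simp add: dist_norm)
  qed
  show ?thesis
  proof (intro exI[of _ q] conjI allI)
    show "0 \<le> q" using q0 by simp
    show "q < 1" by (rule q1)
    fix x0 :: "real^'n"
    define xs where "xs = (\<lambda>n. ((?P \<circ> ?Q) ^^ n) x0)"
    have xsS: "xs (Suc n) = ?P (?Q (xs n))" for n by (simp add: xs_def)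
    have xsP: "?P (xs (Suc n)) = xs (Suc n)" for n using Pb_idem[OF ON b] xsS by simp
    define D where "D n = infdist (xs n) C" for n
    have D1: "D (Suc n) \<le> q ^ n * D 0" for n
    proof (induction n)
      case 0 then show ?case using Dmono[of "xs 0"] xsS[of 0] unfolding D_def by simp
    next
      case (Suc n)
      have "D (Suc (Suc n)) \<le> q * D (Suc n)"
        using Dstep[OF xsP[of n]] xsS[of "Suc n"] unfolding D_def by simp
      also have "\<dots> \<le> q * (q ^ n * D 0)" using Suc q0 by (intro mult_left_mono) auto
      finally show ?case by simp
    qed
    define B where "B = D 0 / q"
    have B0: "0 \<le> B" unfolding B_def D_def using q0 infdist_nonneg[of "xs 0" C] by simp
    have Dn: "D n \<le> B * q ^ n" for n
    proof (cases n)
      case 0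
      have "D 0 \<le> D 0 / q" using q0 q1 infdist_nonneg[of "xs 0" C] unfolding D_def
        by (simp add: divide_simps mult_left_le)
      then show ?thesis using 0 B_def by simp
    next
      case (Suc m)
      then show ?thesis using D1[of m] q0 unfolding B_def by (simp add: field_simps)
    qed
    have fej: "norm (xs m - c) \<le> norm (xs n - c)" if "n \<le> m" "c \<in> C" for n m c
      using that(1)
    proof (induction m rule: dec_induct)
      case base then show ?case by simp
    next
      case (step m)
      then show ?case using Fej[OF that(2), of "xs m"] xsS[of m] by simp
    qed
    have "\<forall>n. \<exists>c. c \<in> C \<and> D n = dist (xs n) c"
      unfolding D_def using infdist_attains_inf[OF closedC Cne] by metis
    then obtain cn where cn: "\<And>n. cn n \<in> C" "\<And>n. D n = norm (xs n - cn n)"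
      by (metis dist_norm)
    have close: "norm (xs m - xs n) \<le> 2 * B * q ^ n" if "n \<le> m" for n m
    proof -
      have "norm (xs m - xs n) \<le> norm (xs m - cn n) + norm (xs n - cn n)"
        by (rule norm_diff_triangle_le[of _ "cn n"]) (auto simp: norm_minus_commute)
      also have "\<dots> \<le> 2 * D n" using fej[OF that cn(1)[of n]] cn(2)[of n] by simp
      also have "\<dots> \<le> 2 * B * q ^ n" using Dn[of n] by simp
      finally show ?thesis .
    qed
    have lim0: "(\<lambda>n. 2 * B * q ^ n) \<longlonglongrightarrow> 0"
      using q0 q1 by (intro tendsto_mult_right_zero LIMSEQ_power_zero) auto
    have "Cauchy xs"
    proof (rule CauchyI)
      fix e :: real assume e: "0 < e"
      have "eventually (\<lambda>n. 2 * B * q ^ n < e) sequentially"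
        using order_tendstoD(2)[OF lim0 e] .
      then obtain M0 where M0: "\<And>n. n \<ge> M0 \<Longrightarrow> 2 * B * q ^ n < e"
        unfolding eventually_sequentially by blast
      show "\<exists>M. \<forall>m\<ge>M. \<forall>n\<ge>M. norm (xs m - xs n) < e"
      proof (intro exI[of _ M0] allI impI)
        fix m n assume mn: "M0 \<le> m" "M0 \<le> n"
        show "norm (xs m - xs n) < e"
        proof (cases "n \<le> m")
          case True then show ?thesis using close[OF True] M0[OF mn(2)] by linarith
        next
          case False
          then have "m \<le> n" by simp
          then show ?thesis using close[of m n] M0[OF mn(1)] by (simp add: norm_minus_commute)
        qed
      qed
    qed
    then obtain xstar where lim: "xs \<longlonglongrightarrow> xstar"
      unfolding Cauchy_convergent_iff convergent_def by blast
    have bound: "norm (xs n - xstar) \<le> 2 * B * q ^ n" for n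
    proof -
      have "xstar \<in> cball (xs n) (2 * B * q ^ n)"
      proof (rule Lim_in_closed_set[OF closed_cball _ _ lim])
        show "eventually (\<lambda>m. xs m \<in> cball (xs n) (2 * B * q ^ n)) sequentially"
          unfolding eventually_sequentially mem_cball dist_norm
        proof (intro exI[of _ n] allI impI)
          fix m assume "n \<le> m"
          then show "norm (xs n - xs m) \<le> 2 * B * q ^ n" using close[of n m] by (metis norm_minus_commute)
        qed
      qed simp
      then show ?thesis by (simp add: dist_norm)
    qed
    have "xstar \<in> C"
    proof -
      have le: "infdist xstar C \<le> 3 * B * q ^ n" for n
      proof -
        have "infdist xstar C \<le> dist xstar (cn n)" by (rule infdist_le[OF cn(1)])
        also have "\<dots> \<le> norm (xstar - xs n) + norm (xs n - cn n)"
          unfolding dist_norm by (rule norm_diff_triangle_le) auto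
        also have "\<dots> \<le> 2 * B * q ^ n + B * q ^ n"
          using bound[of n] cn(2)[of n] Dn[of n] by (simp add: norm_minus_commute)
        finally show ?thesis by simp
      qed
      have lim3: "(\<lambda>n. 3 * B * q ^ n) \<longlonglongrightarrow> 0"
        using q0 q1 by (intro tendsto_mult_right_zero LIMSEQ_power_zero) auto
      have "infdist xstar C \<le> 0"
        by (rule LIMSEQ_le_const[OF lim3]) (use le in auto)
      then have "infdist xstar C = 0" using infdist_nonneg[of xstar C] by linarith
      then show ?thesis using in_closed_iff_infdist_zero[OF closedC Cne] by blast
    qed
    then have final: "\<exists>xstar\<in>C. xs \<longlonglongrightarrow> xstar \<and> (\<exists>K. \<forall>n. norm (xs n - xstar) \<le> K * q ^ n)"
      using lim bound by blast
    show "let s = (\<lambda>i. sgn (x $ v i));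
           C = band_set u fL fU \<inter> sign_set v M s;
           xs = (\<lambda>n. ((Pb u fL fU \<circ> Pv v M s) ^^ n) x0)
       in \<exists>xstar \<in> C. xs \<longlonglongrightarrow> xstar \<and>
            (\<exists>K. \<forall>n. norm (xs n - xstar) \<le> K * q ^ n)"
      using final unfolding Let_def C_def xs_def s_def .
  qed
qed

end
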